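(* Let $P$ be a classifier on $\mathbb{R}^n$ and $x \in \mathbb{R}^n$ such that the coverage of $P$ at $x$ is infinite. Then $P(x)$ contains an open halfspace $H$ with $x \in \mathrm{bd}(H)$.
   Context: A classifier is a partition $P$ of $\mathbb{R}^n$ together with a distinguished member $R \in P$, the refinement set, which may be empty and which is both meagre and Lebesgue null; the label set is $L_P = P \setminus\{R\}$. For $x \in \mathbb{R}^n$, $P(x)$ denotes the member of $P$ containing $x$. An anchor for $x$ is an open ball $A = B(c,r)$ with $x \in A \subseteq P(x)$, and its coverage is its radius $r$. The coverage of $P$ at $x$ is infinite if there exists a sequence of anchors for $x$ whose radii are unbounded. $\mathrm{bd}(X)$ denotes the topological boundary of $X$. *)

theory Defs
  imports "HOL-Analysis.Analysis"
begin

definition nowhere_dense :: "'a::topological_space set \<Rightarrow> bool" where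
  "nowhere_dense S \<longleftrightarrow> interior (closure S) = {}"

definition meagre :: "'a::topological_space set \<Rightarrow> bool" where
  "meagre S \<longleftrightarrow> (\<exists>F. countable F \<and> (\<forall>N\<in>F. nowhere_dense N) \<and> S \<subseteq> \<Union>F)"

definition classifier :: "(real^'n) set set \<Rightarrow> (real^'n) set \<Rightarrow> bool" where
  "classifier P R \<longleftrightarrow>
     R \<in> P \<and> \<Union>P = UNIV \<and>
     (\<forall>A\<in>P. \<forall>B\<in>P. A \<noteq> B \<longrightarrow> A \<inter> B = {}) \<and>
     (\<forall>A\<in>P. A \<noteq> R \<longrightarrow> A \<noteq> {}) \<and>
     meagre R \<and> R \<in> null_sets lebesgue"


definition cell :: "'a set set \<Rightarrow> 'a \<Rightarrow> 'a set" where
  "cell P x = (THE A. A \<in> P \<and> x \<in> A)"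

definition anchor :: "(real^'n) set set \<Rightarrow> real^'n \<Rightarrow> real^'n \<Rightarrow> real \<Rightarrow> bool" where
  "anchor P x c r \<longleftrightarrow> x \<in> ball c r \<and> ball c r \<subseteq> cell P x"

definition infinite_coverage :: "(real^'n) set set \<Rightarrow> real^'n \<Rightarrow> bool" where
  "infinite_coverage P x \<longleftrightarrow>
     (\<exists>c r. (\<forall>k::nat. anchor P x (c k) (r k)) \<and> \<not> bdd_above (range r))"

end

theory Submission
  imports Defs
begin
lemma ineq_aux:
  fixes x y c u :: "'a::real_inner"
  assumes "dist c x < r" "norm u = 1" "c - x = norm (c-x) *\<^sub>R u" "u \<bullet> (y-x) \<ge> t/2" "t>0"
    "r > 2*(norm(y-x))^2/t + 2*norm(y-x)+1"
  shows "dist c y < r"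
proof -
  define dd where "dd = norm (c - x)"
  define w where "w = y - x"
  define nw where "nw = norm w"
  define sv where "sv = u \<bullet> w"
  have d0: "0 \<le> dd" and dr: "dd < r" using assms(1) by (auto simp: dd_def dist_norm)
  have n0: "0 \<le> nw" by (simp add: nw_def)
  have st: "sv \<ge> t/2" using assms(4) by (simp add: sv_def w_def)
  have r0: "r > 0" using dr d0 by linarith
  have "c - y = dd *\<^sub>R u - w" using assms(3) by (simp add: dd_def w_def algebra_simps)
  then have "(dist c y)^2 = (dd *\<^sub>R u - w) \<bullet> (dd *\<^sub>R u - w)"
    by (simp add: dist_norm power2_norm_eq_inner)
  also have "\<dots> = dd^2 - 2*dd * sv + nw^2"
  proof -
    have uu: "u \<bullet> u = 1" using assms(2) by (simp add: norm_eq_1)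
    have ww: "w \<bullet> w = nw^2" by (simp add: nw_def power2_norm_eq_inner)
    have "(dd *\<^sub>R u - w) \<bullet> (dd *\<^sub>R u - w) = dd*dd*(u \<bullet> u) - 2*dd*(u \<bullet> w) + w \<bullet> w"
      by (simp add: inner_diff_left inner_diff_right inner_commute[of w u] algebra_simps)
    then show ?thesis by (simp add: uu ww sv_def power2_eq_square)
  qed
  finally have eq: "(dist c y)^2 = dd^2 - 2*dd * sv + nw^2" .
  have rn: "r > 2*nw^2/t + 2*nw + 1" using assms(6) by (simp add: nw_def w_def)
  have tn: "2*nw^2/t \<ge> 0" using assms(5) by simp
  have "dd^2 - 2*dd * sv + nw^2 < r^2"
  proof (cases "dd \<ge> r/2")
    case True
    have "r * t > 2*nw^2"
    proof -
      have "r > 2*nw^2/t" using rn n0 by linarith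
      then show ?thesis using assms(5) by (simp add: divide_less_eq mult.commute)
    qed
    moreover have "dd * sv \<ge> (r/2) * (t/2)"
      using True st assms(5) r0 by (intro mult_mono) auto
    moreover have "dd^2 < r^2" using d0 dr by (simp add: power_strict_mono)
    ultimately show ?thesis by linarith
  next
    case False
    have "dd * sv \<ge> 0" using d0 st assms(5) by simp
    moreover have "dd^2 \<le> (r/2)^2" using False d0 by (simp add: power_mono)
    moreover have "nw^2 \<le> (r/2)^2" using rn tn n0 by (intro power_mono) auto
    moreover have "(r/2)^2 = r^2/4" by (simp add: power_divide)
    moreover have "r^2 > 0" using r0 by simp
    ultimately show ?thesis by linarith
  qed
  then have "(dist c y)^2 < r^2" using eq by simp
  then show ?thesis using r0 by (simp add: power_less_imp_less_base)
qed


theorem lemma2: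
  fixes P :: "(real^'n) set set" and R :: "(real^'n) set" and x :: "real^'n"
  assumes "classifier P R"
    and "infinite_coverage P x"
  shows "\<exists>a b. a \<noteq> 0 \<and> {y. a \<bullet> y > b} \<subseteq> cell P x \<and> x \<in> frontier {y. a \<bullet> y > b}"
proof -
  obtain c r where anc0: "\<forall>k::nat. anchor P x (c k) (r k)" and nb: "\<not> bdd_above (range r)"
    using assms(2) unfolding infinite_coverage_def by (elim exE conjE) (rule that)
  have anc: "anchor P x (c k) (r k)" for k using anc0 by blast
  have "\<forall>m::nat. \<exists>k. r k \<ge> real m"
  proof
    fix m :: nat
    show "\<exists>k. r k \<ge> real m"
    proof (rule ccontr)
      assume "\<not> ?thesis"
      then have "\<forall>k. r k \<le> real m" by (auto simp: not_le less_imp_le)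
      then have "bdd_above (range r)" by (auto intro: bdd_aboveI)
      then show False using nb by simp
    qed
  qed
  then obtain g where g: "\<And>m. r (g m) \<ge> real m" by metis
  obtain e :: "real^'n" where e: "norm e = 1" using vector_choose_size[of 1] by auto
  define u where "u k = (if c k = x then e else (1 / norm (c k - x)) *\<^sub>R (c k - x))" for k
  have nu: "norm (u k) = 1" for k using e by (simp add: u_def)
  have cu: "c k - x = norm (c k - x) *\<^sub>R u k" for k by (simp add: u_def)
  have "\<forall>m. u (g m) \<in> sphere 0 1" using nu by simp
  then obtain l h where l: "l \<in> sphere 0 1" and h: "strict_mono (h :: nat \<Rightarrow> nat)"
    and lim: "((\<lambda>m. u (g m)) \<circ> h) \<longlonglongrightarrow> l"
    using seq_compactE[OF compact_imp_seq_compact[OF compact_sphere]] by metis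
  have l0: "l \<noteq> 0" using l by auto
  have sub: "{y. l \<bullet> y > l \<bullet> x} \<subseteq> cell P x"
  proof
    fix y assume "y \<in> {y. l \<bullet> y > l \<bullet> x}"
    then have t0: "l \<bullet> (y - x) > 0" by (simp add: inner_diff_right)
    define t where "t = l \<bullet> (y - x)"
    have t: "t > 0" using t0 by (simp add: t_def)
    have "(\<lambda>j. u (g (h j)) \<bullet> (y - x)) \<longlonglongrightarrow> t"
      unfolding t_def using tendsto_inner[OF lim tendsto_const] by (simp add: o_def)
    then have ev1: "\<forall>\<^sub>F j in sequentially. u (g (h j)) \<bullet> (y - x) > t/2"
      using t by (intro order_tendstoD(1)) auto
    define N where "N = 2*(norm(y-x))^2/t + 2*norm(y-x)+1"
    obtain M :: nat where M: "N < real M" using reals_Archimedean2 by blast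
    have ev2: "\<forall>\<^sub>F j in sequentially. j \<ge> M"
      by (rule eventually_ge_at_top)
    obtain j where j1: "u (g (h j)) \<bullet> (y - x) > t/2" and j2': "j \<ge> M"
      using eventually_happens[OF eventually_conj[OF ev1 ev2]] by auto
    have j2: "real j > N" using j2' M by linarith
    define k where "k = g (h j)"
    have "real j \<le> real (h j)" using seq_suble[OF h, of j] by simp
    then have rk: "r k > N" using g[of "h j"] j2 by (simp add: k_def)
    have ak: "anchor P x (c k) (r k)" by (rule anc)
    then have dk: "dist (c k) x < r k" by (simp add: anchor_def)
    have "dist (c k) y < r k"
      using ineq_aux[OF dk nu[of k] cu[of k], where y=y and t=t] j1 t rk by (simp add: k_def N_def)
    then show "y \<in> cell P x" using ak by (auto simp: anchor_def)
  qed
  have "x \<in> frontier {y. l \<bullet> y > l \<bullet> x}" using frontier_halfspace_gt[of l "l \<bullet> x"] l0 by simp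
  then show ?thesis using l0 sub by blast
qed
end
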